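(* Let $E$ be an $\mathbf{a}$-dimensional linear space of $\mathbf{b}\times\mathbf{c}$ complex matrices of bounded rank $r$, with basis $E_1,\dots,E_{\mathbf{a}}$, and let $F\subset \operatorname{End}(\mathbb{C}^k)$ be an $\mathbf{a}$-dimensional linear space of pairwise commuting matrices, with basis $F_1,\dots,F_{\mathbf{a}}$. Let $\tilde E$ be the linear space of $\mathbf{b}k\times\mathbf{c}k$ matrices obtained as follows: for each $i$, replace each entry $e$ of $E_i$ by the $k\times k$ block $eF_i$ (i.e., form the Kronecker product $E_i\otimes F_i$), and let $\tilde E$ be the span of the resulting matrices, $\tilde E=\{\sum_{i} t_i\, E_i\otimes F_i : t_i\in\mathbb{C}\}$. Then every element of $\tilde E$ has rank at most $kr$.
   Context: A linear space of $\mathbf{b}\times\mathbf{c}$ matrices is of bounded rank $r$ if the maximal rank of its elements is $r$ and $r<\min\{\mathbf{b},\mathbf{c}\}$. *)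

theory Defs
  imports "HOL-Analysis.Analysis"
begin

text \<open>Complex linear combination of a finite family of matrices indexed by the finite type 'i.\<close>
definition lin_comb :: "('i::finite \<Rightarrow> complex) \<Rightarrow> ('i \<Rightarrow> complex^'c^'b) \<Rightarrow> complex^'c^'b" where
  "lin_comb t M = (\<chi> x y. \<Sum>l\<in>UNIV. t l * M l $ x $ y)"

text \<open>Complex span of the family.\<close>
definition cspan_fam :: "('i::finite \<Rightarrow> complex^'c^'b) \<Rightarrow> (complex^'c^'b) set" where
  "cspan_fam M = {lin_comb t M | t. True}"

text \<open>Linear independence over the complex numbers.\<close>
definition clin_indep_fam :: "('i::finite \<Rightarrow> complex^'c^'b) \<Rightarrow> bool" where
  "clin_indep_fam M \<longleftrightarrow> (\<forall>t. lin_comb t M = 0 \<longrightarrow> (\<forall>l. t l = 0))"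

text \<open>Bounded rank r: maximal rank of elements is r, and r < min b c.\<close>
definition bounded_rank :: "(complex^'c::finite^'b::finite) set \<Rightarrow> nat \<Rightarrow> bool" where
  "bounded_rank S r \<longleftrightarrow> (\<exists>A\<in>S. rank A = r) \<and> (\<forall>A\<in>S. rank A \<le> r) \<and> r < min CARD('b) CARD('c)"

text \<open>Kronecker product: entry e of A is replaced by the block e B.\<close>
definition kron :: "complex^'c^'b \<Rightarrow> complex^'q^'p \<Rightarrow> complex^('c \<times> 'q)^('b \<times> 'p)" where
  "kron A B = (\<chi> ip jq. A $ fst ip $ fst jq * B $ snd ip $ snd jq)"

end

theory Submission
  imports Defs "HOL-Computational_Algebra.Polynomial"
begin

(* ---- part P1 ---- *)
definition crank :: "complex^'n^'m \<Rightarrow> nat" where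
  "crank A = vec.dim (range ((*v) A))"

lemma lin_mv: "Vector_Spaces.linear (*s) (*s) ((*v) (A::complex^'n^'m))"
  by (rule vec.linear_axioms)

lemma dim_image_sub:
  fixes A :: "complex^'n^'m"
  assumes V: "vec.subspace V" and WV: "W \<subseteq> V"
  shows "vec.dim ((*v) A ` V) + vec.dim W \<le> vec.dim ((*v) A ` W) + vec.dim V"
proof -
  let ?f = "(*v) A"
  obtain BW where BW: "BW \<subseteq> W" "vec.independent BW" "W \<subseteq> vec.span BW" "card BW = vec.dim W"
    using vec.basis_exists by blast
  obtain B where B: "BW \<subseteq> B" "B \<subseteq> V" "vec.independent B" "V \<subseteq> vec.span B"
    using vec.maximal_independent_subset_extend[of BW V] BW WV by blast
  have cB: "card B = vec.dim V"
    using vec.basis_card_eq_dim B by blast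
  obtain C where C: "C \<subseteq> ?f ` W" "vec.independent C" "?f ` W \<subseteq> vec.span C" "card C = vec.dim (?f ` W)"
    using vec.basis_exists by blast
  have fB: "finite B" using B(3) vec.finiteI_independent by blast
  have fC: "finite C" using C(2) vec.finiteI_independent by blast
  have sub: "?f ` V \<subseteq> vec.span (C \<union> ?f ` (B - BW))"
  proof -
    have "?f ` B \<subseteq> vec.span (C \<union> ?f ` (B - BW))"
    proof
      fix z assume "z \<in> ?f ` B"
      then obtain b where b: "b \<in> B" "z = ?f b" by blast
      show "z \<in> vec.span (C \<union> ?f ` (B - BW))"
      proof (cases "b \<in> BW")
        case True
        then have "z \<in> vec.span C" using b BW(1) C(3) by blast
        then show ?thesis by (meson in_mono sup_ge1 vec.span_mono)
      next
        case False
        then show ?thesis using b by (simp add: vec.span_base)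
      qed
    qed
    then have "vec.span (?f ` B) \<subseteq> vec.span (C \<union> ?f ` (B - BW))"
      by (metis vec.span_mono vec.span_span)
    moreover have "?f ` V \<subseteq> vec.span (?f ` B)"
      using B(4) vec.span_image by blast
    ultimately show ?thesis by blast
  qed
  have "vec.dim (?f ` V) \<le> card (C \<union> ?f ` (B - BW))"
    using vec.dim_le_card[OF sub] fB fC by simp
  also have "\<dots> \<le> card C + card (?f ` (B - BW))" by (rule card_Un_le)
  also have "\<dots> \<le> card C + card (B - BW)" using card_image_le[of "B - BW"] fB by simp
  also have "card (B - BW) = card B - card BW"
    using B(1) fB by (meson card_Diff_subset finite_subset)
  finally have "vec.dim (?f ` V) \<le> card C + (card B - card BW)" .
  moreover have "card BW \<le> card B" using B(1) fB by (rule card_mono[rotated])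
  ultimately show ?thesis using C(4) cB BW(4) by linarith
qed

lemma inj_from_dim:
  fixes A :: "complex^'n^'m"
  assumes V: "vec.subspace V" and eq: "vec.dim ((*v) A ` V) = vec.dim V"
    and x: "x \<in> V" and ax: "A *v x = 0"
  shows "x = 0"
proof (rule ccontr)
  assume nz: "x \<noteq> 0"
  have "vec.span {x} \<subseteq> V" using V x by (simp add: vec.span_minimal)
  from dim_image_sub[OF V this, of A]
  have "vec.dim ((*v) A ` V) + vec.dim (vec.span {x}) \<le> vec.dim ((*v) A ` vec.span {x}) + vec.dim V" .
  moreover have "(*v) A ` vec.span {x} = vec.span {0}"
    using ax by (metis image_empty image_insert vec.span_image)
  moreover have "vec.dim (vec.span {x}) = 1" using nz by simp
  ultimately show False using eq by simp
qed

lemma crank_mult_left: "crank (A ** B) \<le> crank (A::complex^'n^'m)"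
  unfolding crank_def
  by (rule vec.dim_subset) (auto simp: matrix_vector_mul_assoc[symmetric])

lemma range_mult: "range ((*v) (A ** B)) = (*v) A ` range ((*v) B)"
  by (auto simp: matrix_vector_mul_assoc[symmetric] image_comp)

lemma crank_mult_right: "crank (A ** B) \<le> crank (B::complex^'n^'m)"
  for A :: "complex^'m^'p"
  unfolding crank_def range_mult by (rule vec.dim_image_le[OF lin_mv])

(* ---- part P2 ---- *)
definition smat :: "'a::times \<Rightarrow> 'a^'n^'m \<Rightarrow> 'a^'n^'m" where
  "smat c A = (\<chi> i j. c * A$i$j)"

primrec mpow :: "'a::semiring_1^'n^'n \<Rightarrow> nat \<Rightarrow> 'a^'n^'n" where
  "mpow A 0 = mat 1"
| "mpow A (Suc n) = A ** mpow A n"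

lemma smat_mult_left: "smat c (A ** B) = smat c A ** (B::'a::comm_semiring_1^'p^'n)"
  by (simp add: smat_def matrix_matrix_mult_def vec_eq_iff sum_distrib_left mult.assoc)

lemma smat_mult_right: "smat c (A ** B) = A ** smat c (B::'a::comm_semiring_1^'p^'n)"
  by (simp add: smat_def matrix_matrix_mult_def vec_eq_iff sum_distrib_left mult_ac)

lemma smat_smat: "smat c (smat d A) = smat (c * d) (A::'a::comm_semiring_1^'n^'m)"
  by (simp add: smat_def vec_eq_iff mult.assoc)

lemma smat_add: "smat c (A + B) = smat c A + smat c (B::'a::comm_semiring_1^'n^'m)"
  by (simp add: smat_def vec_eq_iff distrib_left)

lemma smat_diff: "smat c (A - B) = smat c A - smat c (B::'a::comm_ring_1^'n^'m)"
  by (simp add: smat_def vec_eq_iff right_diff_distrib)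

lemma smat_0 [simp]: "smat c 0 = (0::'a::comm_semiring_1^'n^'m)"
  by (simp add: smat_def vec_eq_iff)

lemma smat_1 [simp]: "smat 1 A = (A::'a::comm_semiring_1^'n^'m)"
  by (simp add: smat_def vec_eq_iff)

lemma smat_sum: "smat c (sum f S) = (\<Sum>i\<in>S. smat c (f i :: 'a::comm_semiring_1^'n^'m))"
  unfolding smat_def vec_eq_iff by (simp add: sum_distrib_left)

lemma sum_smat: "smat (sum g S) A = (\<Sum>i\<in>S. smat (g i) (A :: 'a::comm_semiring_1^'n^'m))"
  unfolding smat_def vec_eq_iff by (simp add: sum_distrib_right)

lemma smat_eq_0_iff: "c \<noteq> 0 \<Longrightarrow> smat c A = 0 \<longleftrightarrow> (A::'a::field^'n^'m) = 0"
  by (auto simp: smat_def vec_eq_iff)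

lemma matrix_add_rdistrib': "(B + C) ** A = B ** A + C ** (A::'a::comm_semiring_1^'p^'n)"
  unfolding matrix_matrix_mult_def vec_eq_iff by (simp add: distrib_right sum.distrib)

lemma sum_mult_left: "(sum f S) ** B = (\<Sum>i\<in>S. f i ** (B::'a::comm_semiring_1^'p^'n))"
  by (induction S rule: infinite_finite_induct) (simp_all add: matrix_add_rdistrib')

lemma sum_mult_right: "A ** (sum f S) = (\<Sum>i\<in>S. A ** (f i::'a::comm_semiring_1^'p^'n))"
  by (induction S rule: infinite_finite_induct) (simp_all add: matrix_add_ldistrib)

lemma matrix_diff_ldistrib: "A ** (B - C) = A ** B - A ** (C::'a::comm_ring_1^'p^'n)"
  unfolding matrix_matrix_mult_def vec_eq_iff by (simp add: right_diff_distrib sum_subtractf)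

lemma matrix_diff_rdistrib: "(B - C) ** A = B ** A - C ** (A::'a::comm_ring_1^'p^'n)"
  unfolding matrix_matrix_mult_def vec_eq_iff by (simp add: left_diff_distrib sum_subtractf)

lemma mpow_Suc': "mpow A (Suc n) = mpow A n ** A"
  by (induction n) (simp_all add: matrix_mul_assoc)

lemma lin_comb_eq: "lin_comb y E = (\<Sum>i\<in>UNIV. smat (y i) (E i))"
  unfolding lin_comb_def smat_def vec_eq_iff by simp

lemma kron_mult: "kron A B ** kron C D = kron (A ** C) (B ** D)"
  by (simp add: kron_def matrix_matrix_mult_def vec_eq_iff sum_product
      UNIV_Times_UNIV[symmetric] sum.cartesian_product mult_ac case_prod_unfold del: UNIV_Times_UNIV)

lemma kron_sum_left: "kron (sum f S) B = (\<Sum>i\<in>S. kron (f i) B)"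
  unfolding kron_def vec_eq_iff by (simp add: sum_distrib_right)

lemma kron_sum_right: "kron A (sum f S) = (\<Sum>i\<in>S. kron A (f i))"
  unfolding kron_def vec_eq_iff by (simp add: sum_distrib_left)

lemma kron_diff_left: "kron (A - B) C = kron A C - kron B C"
  by (simp add: kron_def vec_eq_iff left_diff_distrib)

lemma kron_mat1: "kron (mat 1) (mat 1) = mat 1"
  by (auto simp: kron_def mat_def vec_eq_iff prod_eq_iff)

(* ---- part P3 ---- *)
definition Lm :: "nat \<Rightarrow> 'i list set" where
  "Lm n = {w. set w \<subseteq> UNIV \<and> length w = n}"

lemma finite_Lm [simp]: "finite (Lm n :: ('i::finite) list set)"
  unfolding Lm_def by (rule finite_lists_length_eq) simp

lemma Lm_0 [simp]: "Lm 0 = {[]}"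
  by (auto simp: Lm_def)

lemma Lm_Suc: "Lm (Suc n) = (\<lambda>(i,w). i # w) ` (UNIV \<times> Lm n)"
  by (auto simp: Lm_def length_Suc_conv image_iff)

lemma Lm_Suc_sum:
  "(\<Sum>w\<in>Lm (Suc n). f w) = (\<Sum>i\<in>(UNIV::'i::finite set). \<Sum>w\<in>Lm n. f (i # w))"
proof -
  have inj: "inj_on (\<lambda>(i,w). i # w) (UNIV \<times> (Lm n :: 'i list set))"
    by (auto simp: inj_on_def)
  show ?thesis
    unfolding Lm_Suc sum.reindex[OF inj] sum.cartesian_product
    by (simp add: case_prod_unfold)
qed

definition lprod :: "('i \<Rightarrow> 'a::semiring_1^'k^'k) \<Rightarrow> 'i list \<Rightarrow> 'a^'k^'k" where
  "lprod A w = foldr (\<lambda>j P. A j ** P) w (mat 1)"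

lemma lprod_Nil [simp]: "lprod A [] = mat 1"
  by (simp add: lprod_def)

lemma lprod_Cons [simp]: "lprod A (i # w) = A i ** lprod A w"
  by (simp add: lprod_def)

lemma lprod_append: "lprod A (u @ v) = lprod A u ** lprod A v"
  by (induction u) (simp_all add: matrix_mul_assoc)

lemma lprod_comm:
  assumes "\<forall>i j. A i ** A j = A j ** A i"
  shows "A i ** lprod A u = lprod A u ** A i"
  using assms by (induction u) (simp_all, metis matrix_mul_assoc)

lemma lprod_mset:
  assumes comm: "\<forall>i j. A i ** A j = A j ** A i"
  shows "mset u = mset v \<Longrightarrow> lprod A u = lprod A v"
proof (induction u arbitrary: v)
  case Nil
  then show ?case by simp
next
  case (Cons i u)
  then have "i \<in> set v" by (metis list.set_intros(1) set_mset_mset)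
  then obtain us ws where v: "v = us @ i # ws" by (meson split_list)
  have "mset u = mset (us @ ws)" using Cons.prems v by simp
  then have IH: "lprod A u = lprod A (us @ ws)" using Cons.IH by blast
  have "lprod A v = lprod A us ** (A i ** lprod A ws)"
    by (simp add: v lprod_append)
  also have "\<dots> = A i ** (lprod A us ** lprod A ws)"
    using lprod_comm[OF comm, of i us] by (metis matrix_mul_assoc)
  also have "\<dots> = lprod A (i # u)" by (simp add: IH lprod_append)
  finally show ?case by simp
qed

lemma mpow_sum_smat:
  fixes Bm :: "'i::finite \<Rightarrow> 'a::comm_semiring_1^'k^'k"
  shows "mpow (\<Sum>i\<in>UNIV. smat (y i) (Bm i)) n
       = (\<Sum>w\<in>Lm n. smat (prod_list (map y w)) (lprod Bm w))"
proof (induction n)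
  case 0
  then show ?case by simp
next
  case (Suc n)
  have "mpow (\<Sum>i\<in>UNIV. smat (y i) (Bm i)) (Suc n)
      = (\<Sum>i\<in>UNIV. \<Sum>w\<in>Lm n. smat (y i) (Bm i) ** smat (prod_list (map y w)) (lprod Bm w))"
    by (simp add: Suc sum_mult_left sum_mult_right) (rule sum.swap)
  also have "\<dots> = (\<Sum>i\<in>UNIV. \<Sum>w\<in>Lm n. smat (prod_list (map y (i # w))) (lprod Bm (i # w)))"
    by (simp add: smat_mult_left[symmetric] smat_mult_right[symmetric] smat_smat mult.commute)
  also have "\<dots> = (\<Sum>w\<in>Lm (Suc n). smat (prod_list (map y w)) (lprod Bm w))"
    by (rule Lm_Suc_sum[symmetric])
  finally show ?case .
qed

lemma mpow_sum_kron:
  fixes Bm :: "'i::finite \<Rightarrow> complex^'p^'p" and A :: "'i \<Rightarrow> complex^'k^'k"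
  shows "mpow (\<Sum>i\<in>UNIV. kron (Bm i) (A i)) n
       = (\<Sum>w\<in>Lm n. kron (lprod Bm w) (lprod A w))"
proof (induction n)
  case 0
  then show ?case by (simp add: kron_mat1)
next
  case (Suc n)
  have "mpow (\<Sum>i\<in>UNIV. kron (Bm i) (A i)) (Suc n)
      = (\<Sum>i\<in>UNIV. \<Sum>w\<in>Lm n. kron (Bm i) (A i) ** kron (lprod Bm w) (lprod A w))"
    by (simp add: Suc sum_mult_left sum_mult_right) (rule sum.swap)
  also have "\<dots> = (\<Sum>i\<in>UNIV. \<Sum>w\<in>Lm n. kron (lprod Bm (i # w)) (lprod A (i # w)))"
    by (simp add: kron_mult)
  also have "\<dots> = (\<Sum>w\<in>Lm (Suc n). kron (lprod Bm w) (lprod A w))"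
    by (rule Lm_Suc_sum[symmetric])
  finally show ?case .
qed

(* ---- part P4 ---- *)
lemma digits_bound:
  fixes c :: "nat \<Rightarrow> nat"
  assumes "\<forall>j<a. c j < B"
  shows "(\<Sum>j<a. c j * B^j) < B^a"
  using assms
proof (induction a)
  case 0
  then show ?case by simp
next
  case (Suc a)
  then have IH: "(\<Sum>j<a. c j * B^j) < B^a" by simp
  have ca: "c a + 1 \<le> B" using Suc.prems by (simp add: Suc_le_eq)
  have "(\<Sum>j<Suc a. c j * B^j) = (\<Sum>j<a. c j * B^j) + c a * B^a" by simp
  also have "\<dots> < B^a + c a * B^a" using IH by simp
  also have "\<dots> = (c a + 1) * B^a" by simp
  also have "\<dots> \<le> B * B^a" using ca by (rule mult_right_mono) simp
  finally show ?case by simp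
qed

lemma digits_unique:
  fixes c d :: "nat \<Rightarrow> nat"
  assumes "\<forall>j<a. c j < B \<and> d j < B"
    and "(\<Sum>j<a. c j * B^j) = (\<Sum>j<a. d j * B^j)"
  shows "\<forall>j<a. c j = d j"
  using assms
proof (induction a)
  case 0
  then show ?case by simp
next
  case (Suc a)
  define Sc where "Sc = (\<Sum>j<a. c j * B^j)"
  define Sd where "Sd = (\<Sum>j<a. d j * B^j)"
  have "c a < B" using Suc.prems(1) by simp
  then have Bp: "B^a \<noteq> 0" by simp
  have bc: "Sc < B^a" unfolding Sc_def using Suc.prems(1) by (intro digits_bound) simp
  have bd: "Sd < B^a" unfolding Sd_def using Suc.prems(1) by (intro digits_bound) simp
  have eq: "Sc + c a * B^a = Sd + d a * B^a"
    using Suc.prems(2) unfolding Sc_def Sd_def by simp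
  have c1: "(Sc + c a * B^a) div B^a = c a"
    by (simp only: div_mult_self1[OF Bp] div_less[OF bc] add_0_right)
  have d1: "(Sd + d a * B^a) div B^a = d a"
    by (simp only: div_mult_self1[OF Bp] div_less[OF bd] add_0_right)
  have ca: "c a = d a" using c1 d1 eq by metis
  then have ScSd: "Sc = Sd" using eq by simp
  have pa: "\<forall>j<a. c j < B \<and> d j < B" using Suc.prems(1) by auto
  have "\<forall>j<a. c j = d j" by (rule Suc.IH[OF pa ScSd[unfolded Sc_def Sd_def]])
  then show ?case using ca by (auto simp: less_Suc_eq)
qed

lemma prod_list_powers:
  fixes x :: "'a::comm_monoid_mult"
  shows "prod_list (map (\<lambda>i. x ^ f i) v) = x ^ sum_list (map f v)"
  by (induction v) (simp_all add: power_add)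

lemma mset_from_code:
  fixes g :: "nat \<Rightarrow> 'i::finite"
  assumes g: "bij_betw g {0..<CARD('i)} UNIV"
    and u: "length u = n" and v: "length v = n"
    and eq: "sum_list (map (\<lambda>j. (Suc n) ^ (inv_into {0..<CARD('i)} g j)) u)
           = sum_list (map (\<lambda>j. (Suc n) ^ (inv_into {0..<CARD('i)} g j)) v)"
  shows "mset u = mset v"
proof -
  define a where "a = CARD('i)"
  define idx where "idx = inv_into {0..<a} g"
  define B where "B = Suc n"
  have gidx: "g (idx j) = j" for j
    unfolding idx_def a_def using g by (simp add: bij_betw_inv_into_right)
  have idxg: "t < a \<Longrightarrow> idx (g t) = t" for t
    unfolding idx_def a_def using g by (simp add: bij_betw_inv_into_left)
  have code: "sum_list (map (\<lambda>j. B ^ idx j) w) = (\<Sum>t<a. count_list w (g t) * B ^ t)" for w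
  proof -
    have "sum_list (map (\<lambda>j. B ^ idx j) w) = (\<Sum>j\<in>set w. count_list w j * B ^ idx j)"
      by (rule sum_list_map_eq_sum_count)
    also have "\<dots> = (\<Sum>j\<in>UNIV. count_list w j * B ^ idx j)"
      by (rule sum.mono_neutral_left) (auto simp: count_list_0_iff)
    also have "\<dots> = (\<Sum>t\<in>{0..<a}. count_list w (g t) * B ^ idx (g t))"
      using g unfolding a_def by (rule sum.reindex_bij_betw[symmetric])
    also have "\<dots> = (\<Sum>t<a. count_list w (g t) * B ^ t)"
      by (simp add: idxg atLeast0LessThan)
    finally show ?thesis .
  qed
  have seq: "(\<Sum>t<a. count_list u (g t) * B ^ t) = (\<Sum>t<a. count_list v (g t) * B ^ t)"
  proof -
    have "sum_list (map (\<lambda>j. B ^ idx j) u) = sum_list (map (\<lambda>j. B ^ idx j) v)"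
      using eq by (simp add: idx_def B_def a_def)
    then show ?thesis by (simp add: code)
  qed
  have lt: "\<forall>t<a. count_list u (g t) < B \<and> count_list v (g t) < B"
  proof (intro allI impI conjI)
    fix t
    show "count_list u (g t) < B" using count_le_length[of u "g t"] u unfolding B_def by simp
    show "count_list v (g t) < B" using count_le_length[of v "g t"] v unfolding B_def by simp
  qed
  have ct: "\<forall>t<a. count_list u (g t) = count_list v (g t)"
    by (rule digits_unique[OF lt seq])
  have idxa: "idx j < a" for j
  proof -
    have "j \<in> g ` {0..<a}" using g unfolding a_def by (simp add: bij_betw_def)
    then have "idx j \<in> {0..<a}" unfolding idx_def by (rule inv_into_into)
    then show ?thesis by simp
  qed
  have "count_list u j = count_list v j" for j
  proof -
    have "count_list u (g (idx j)) = count_list v (g (idx j))" using ct idxa[of j] by blast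
    then show ?thesis by (simp only: gidx)
  qed
  then show ?thesis by (intro multiset_eqI) (simp add: count_mset)
qed

lemma transfer_comm:
  fixes C :: "'i::finite list \<Rightarrow> complex^'p^'q" and A :: "'i \<Rightarrow> complex^'k^'k"
  assumes comm: "\<forall>i j. A i ** A j = A j ** A i"
    and hyp: "\<forall>y. (\<Sum>v\<in>Lm n. smat (prod_list (map y v)) (C v)) = 0"
  shows "(\<Sum>v\<in>Lm n. kron (C v) (lprod A v)) = 0"
proof -
  obtain g :: "nat \<Rightarrow> 'i" where g: "bij_betw g {0..<CARD('i)} UNIV"
    using ex_bij_betw_nat_finite[of "UNIV :: 'i set"] by auto
  define e where "e v = sum_list (map (\<lambda>j. (Suc n) ^ (inv_into {0..<CARD('i)} g j)) v)" for v :: "'i list"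
  have same: "v \<in> Lm n \<Longrightarrow> w \<in> Lm n \<Longrightarrow> e v = e w \<Longrightarrow> lprod A v = lprod A w" for v w
    by (rule lprod_mset[OF comm], rule mset_from_code[OF g, of v n w]) (auto simp: Lm_def e_def)
  define K where "K = Max (e ` Lm n)"
  have eK: "v \<in> Lm n \<Longrightarrow> e v \<le> K" for v unfolding K_def by simp
  show ?thesis
  proof (subst vec_eq_iff, intro allI, subst vec_eq_iff, intro allI)
    fix ap :: "'q \<times> 'k" and bq :: "'p \<times> 'k"
    obtain a p where ap: "ap = (a, p)" by fastforce
    obtain b q where bq: "bq = (b, q)" by fastforce
    define c where "c v = C v $ a $ b" for v
    have coeff0: "(\<Sum>v\<in>{v\<in>Lm n. e v = t}. c v) = 0" for t
    proof (cases "t \<le> K")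
      case True
      have "\<forall>x::complex. (\<Sum>t\<le>K. (\<Sum>v\<in>{v\<in>Lm n. e v = t}. c v) * x ^ t) = 0"
      proof
        fix x :: complex
        have "(\<Sum>t\<le>K. (\<Sum>v\<in>{v\<in>Lm n. e v = t}. c v) * x ^ t)
            = (\<Sum>t\<le>K. (\<Sum>v\<in>{v\<in>Lm n. e v = t}. x ^ e v * c v))"
          unfolding sum_distrib_right by (intro sum.cong refl) (auto simp: mult.commute)
        also have "\<dots> = (\<Sum>v\<in>Lm n. x ^ e v * c v)"
          by (rule sum.group) (auto simp: eK)
        also have "\<dots> = (\<Sum>v\<in>Lm n. smat (prod_list (map (\<lambda>i. x ^ ((Suc n) ^ (inv_into {0..<CARD('i)} g i))) v)) (C v)) $ a $ b"
          by (simp add: smat_def c_def prod_list_powers e_def)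
        also have "\<dots> = 0" using hyp by simp
        finally show "(\<Sum>t\<le>K. (\<Sum>v\<in>{v\<in>Lm n. e v = t}. c v) * x ^ t) = 0" .
      qed
      then have "\<forall>k\<le>K. (\<Sum>v\<in>{v\<in>Lm n. e v = k}. c v) = 0"
        by (subst (asm) polyfun_eq_0)
      then show ?thesis using True by blast
    next
      case False
      then have "{v\<in>Lm n. e v = t} = {}" using eK by fastforce
      then show ?thesis by (simp only: sum.empty)
    qed
    define rep where "rep t = (SOME v. v \<in> Lm n \<and> e v = t)" for t
    have rep: "v \<in> Lm n \<Longrightarrow> lprod A v = lprod A (rep (e v))" for v
    proof -
      assume v: "v \<in> Lm n"
      then have ex: "\<exists>w. w \<in> Lm n \<and> e w = e v" by blast
      have "rep (e v) \<in> Lm n \<and> e (rep (e v)) = e v"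
        unfolding rep_def by (rule someI_ex[OF ex])
      then show ?thesis using same[OF v, of "rep (e v)"] by simp
    qed
    have "(\<Sum>v\<in>Lm n. kron (C v) (lprod A v)) $ ap $ bq = (\<Sum>v\<in>Lm n. kron (C v) (lprod A v) $ ap $ bq)"
      by (simp only: sum_component)
    also have "\<dots> = (\<Sum>v\<in>Lm n. c v * lprod A v $ p $ q)"
      by (intro sum.cong refl) (simp add: kron_def ap bq c_def)
    also have "\<dots> = (\<Sum>v\<in>Lm n. c v * lprod A (rep (e v)) $ p $ q)"
      by (intro sum.cong refl) (simp only: rep[symmetric])
    also have "\<dots> = (\<Sum>t\<in>e ` Lm n. \<Sum>v\<in>{v\<in>Lm n. e v = t}. c v * lprod A (rep (e v)) $ p $ q)"
      by (rule sum.group[symmetric]) auto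
    also have "\<dots> = (\<Sum>t\<in>e ` Lm n. (\<Sum>v\<in>{v\<in>Lm n. e v = t}. c v) * lprod A (rep t) $ p $ q)"
      by (rule sum.cong) (simp_all add: sum_distrib_right)
    also have "\<dots> = 0" by (simp add: coeff0)
    finally show "(\<Sum>v\<in>Lm n. kron (C v) (lprod A v)) $ ap $ bq = 0 $ ap $ bq" by simp
  qed
qed

(* ---- part P5 ---- *)
lemma subspace_range: "vec.subspace (range ((*v) (A::complex^'n^'m)))"
  by (rule vec.subspace_image) (rule vec.subspace_UNIV)

lemma matrix_eq_mv: "(\<And>x. A *v x = B *v x) \<Longrightarrow> A = (B::complex^'n^'m)"
  using matrix_eq by blast

lemma scal_step:
  fixes X0 Y :: "complex^'p^'q" and H :: "complex^'q^'p" and Ti :: "complex^'p^'p"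
  assumes XHX: "X0 ** H ** X0 = X0"
    and rk: "crank (X0 + smat e Y) \<le> crank X0"
    and inv: "(mat 1 + smat e (H ** Y)) ** Ti = mat 1"
    and e: "e \<noteq> 0"
  shows "(mat 1 - X0 ** H) ** Y ** Ti ** (mat 1 - H ** X0) = 0"
proof -
  define T where "T = mat 1 + smat e (H ** Y)"
  define Z where "Z = X0 + smat e Y"
  define G where "G = Z ** Ti"
  define J where "J = (mat 1 - H ** X0 :: complex^'p^'p)"
  define J' where "J' = (mat 1 - X0 ** H :: complex^'q^'q)"
  have DZ: "(X0 ** H) ** Z = X0 ** T"
    unfolding Z_def T_def
    by (simp add: matrix_add_ldistrib smat_mult_right XHX matrix_mul_assoc)
  have DG: "(X0 ** H) ** G = X0"
    unfolding G_def using DZ inv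
    by (metis T_def matrix_mul_assoc matrix_mul_rid)
  have a: "crank X0 \<le> crank G" using DG crank_mult_right by metis
  have b: "crank G \<le> crank Z" unfolding G_def by (rule crank_mult_left)
  have c: "crank Z \<le> crank X0" using rk Z_def by simp
  have eqr: "crank ((X0 ** H) ** G) = crank G" using DG a b c by simp
  have dimeq: "vec.dim ((*v) (X0 ** H) ` range ((*v) G)) = vec.dim (range ((*v) G))"
    using eqr unfolding crank_def range_mult .
  have XJ: "X0 ** J = 0"
    unfolding J_def by (simp add: matrix_diff_ldistrib matrix_mul_assoc XHX)
  have GJ: "G ** J = 0"
  proof (rule matrix_eq_mv)
    fix v
    have "(X0 ** H) *v (G *v (J *v v)) = ((X0 ** H) ** G ** J) *v v"
      by (simp add: matrix_vector_mul_assoc matrix_mul_assoc)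
    also have "\<dots> = 0" by (simp add: DG XJ)
    finally have "G *v (J *v v) = 0"
      using inj_from_dim[OF subspace_range dimeq] by blast
    then show "(G ** J) *v v = 0 *v v" by (simp add: matrix_vector_mul_assoc)
  qed
  have J'X: "J' ** X0 = 0"
    unfolding J'_def by (simp add: matrix_diff_rdistrib XHX)
  have J'Z: "J' ** Z = smat e (J' ** Y)"
    unfolding Z_def by (simp add: matrix_add_ldistrib J'X smat_mult_right)
  have "J' ** G ** J = 0" by (simp add: GJ matrix_mul_assoc[symmetric])
  then have "smat e (J' ** Y ** Ti ** J) = 0"
    unfolding G_def by (simp add: J'Z matrix_mul_assoc smat_mult_left)
  then show ?thesis
    using e smat_eq_0_iff unfolding J_def J'_def by blast
qed


definition pev :: "complex \<Rightarrow> complex poly^'n^'m \<Rightarrow> complex^'n^'m" where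
  "pev x P = (\<chi> i j. poly (P$i$j) x)"

definition cP :: "complex^'n^'m \<Rightarrow> complex poly^'n^'m" where
  "cP M = (\<chi> i j. [:M$i$j:])"

definition cf :: "nat \<Rightarrow> complex poly^'n^'m \<Rightarrow> complex^'n^'m" where
  "cf k P = (\<chi> i j. coeff (P$i$j) k)"

definition adjP :: "'a::comm_ring_1^'n^'n \<Rightarrow> 'a^'n^'n" where
  "adjP A = (\<chi> k j. det (\<chi> i l. if l = k then (if i = j then 1 else 0) else A$i$l))"

lemma pev_mult: "pev x (P ** Q) = pev x P ** pev x Q"
  unfolding pev_def matrix_matrix_mult_def by (simp add: poly_sum)

lemma pev_add: "pev x (P + Q) = pev x P + pev x Q"
  unfolding pev_def by (simp add: vec_eq_iff)

lemma pev_diff: "pev x (P - Q) = pev x P - pev x Q"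
  unfolding pev_def by (simp add: vec_eq_iff)

lemma pev_smat: "pev x (smat p P) = smat (poly p x) (pev x P)"
  unfolding pev_def smat_def by (simp add: vec_eq_iff)

lemma pev_cP [simp]: "pev x (cP M) = M"
  unfolding pev_def cP_def by (simp add: vec_eq_iff)

lemma pev_mat1 [simp]: "pev x (mat 1) = mat 1"
  unfolding pev_def mat_def by (simp add: vec_eq_iff)

lemma pev_0 [simp]: "pev x 0 = 0"
  unfolding pev_def by (simp add: vec_eq_iff)

lemma pev_det: "poly (det P) x = det (pev x P)"
  unfolding det_def pev_def by (simp add: poly_sum poly_prod)

lemma pev_adjP: "pev x (adjP P) = adjP (pev x P)"
proof -
  have *: "pev x (\<chi> i l. if l = k then (if i = j then 1 else 0) else P$i$l)
      = (\<chi> i l. if l = k then (if i = j then 1 else 0) else pev x P $i$l)" for k j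
    unfolding pev_def by (simp add: vec_eq_iff)
  have "pev x (adjP P) $ k $ j = adjP (pev x P) $ k $ j" for k j
  proof -
    have "pev x (adjP P) $ k $ j = poly (det (\<chi> i l. if l = k then (if i = j then 1 else 0) else P$i$l)) x"
      by (simp add: pev_def adjP_def)
    also have "\<dots> = det (pev x (\<chi> i l. if l = k then (if i = j then 1 else 0) else P$i$l))"
      by (rule pev_det)
    also have "\<dots> = adjP (pev x P) $ k $ j" by (simp add: adjP_def *)
    finally show ?thesis .
  qed
  then show ?thesis by (simp add: vec_eq_iff)
qed

lemma adjP_inv:
  fixes A B :: "complex^'n^'n"
  assumes "A ** B = mat 1"
  shows "adjP A = smat (det A) B"
proof -
  have "adjP A $ k $ j = B $ k $ j * det A" for k j
  proof -
    define x where "x = column j B"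
    have Ax: "(A *v x) $ i = (if i = j then 1 else 0)" for i
      using assms unfolding x_def column_def
      by (simp add: matrix_vector_mult_def matrix_matrix_mult_def vec_eq_iff mat_def)
    have M: "(\<chi> i l. if l = k then (A *v x)$i else A$i$l) = (\<chi> i l. if l = k then (if i = j then 1 else 0) else A$i$l)"
      by (simp add: vec_eq_iff Ax)
    have "adjP A $ k $ j = det (\<chi> i l. if l = k then (A *v x)$i else A$i$l)"
      unfolding adjP_def M by simp
    also have "\<dots> = x $ k * det A" by (rule cramer_lemma)
    finally show ?thesis unfolding x_def column_def by simp
  qed
  then show ?thesis unfolding smat_def by (simp add: vec_eq_iff mult.commute)
qed

lemma poly_zero_cofinite:
  fixes q d :: "complex poly"
  assumes d: "d \<noteq> 0" and h: "\<And>x. poly d x \<noteq> 0 \<Longrightarrow> x \<noteq> 0 \<Longrightarrow> poly q x = 0"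
  shows "q = 0"
proof -
  have "poly (q * d * [:0,1:]) x = 0" for x
    using h[of x] by (cases "poly d x = 0 \<or> x = 0") auto
  then have "q * d * [:0,1:] = 0" using poly_all_0_iff_0 by blast
  then show ?thesis using d by simp
qed

lemma pmat_zero_cofinite:
  fixes P :: "complex poly^'n^'m" and d :: "complex poly"
  assumes d: "d \<noteq> 0" and h: "\<And>x. poly d x \<noteq> 0 \<Longrightarrow> x \<noteq> 0 \<Longrightarrow> pev x P = 0"
  shows "P = 0"
proof -
  have "P $ i $ j = 0" for i j
  proof (rule poly_zero_cofinite[OF d])
    fix x assume "poly d x \<noteq> 0" "x \<noteq> 0"
    then have "pev x P $ i $ j = 0" using h by simp
    then show "poly (P $ i $ j) x = 0" unfolding pev_def by simp
  qed
  then show ?thesis by (simp add: vec_eq_iff)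
qed

lemma coeff_const_mult: "coeff ([:c:] * p) k = c * coeff p k"
  by (simp add: mult_pCons_left)

lemma cf_cP_left: "cf k (cP M ** P) = M ** cf k P"
  unfolding cf_def cP_def matrix_matrix_mult_def by (simp add: coeff_sum coeff_const_mult)

lemma cf_cP_right: "cf k (P ** cP M) = cf k P ** M"
  unfolding cf_def cP_def matrix_matrix_mult_def
  by (simp add: coeff_sum coeff_const_mult mult.commute)

lemma cf_add: "cf k (P + Q) = cf k P + cf k Q"
  unfolding cf_def by (simp add: vec_eq_iff)

lemma cf_0 [simp]: "cf k 0 = 0"
  unfolding cf_def by (simp add: vec_eq_iff)

lemma cf_smat_X_0: "cf 0 (smat [:0,1:] P) = 0"
  unfolding cf_def smat_def by (simp add: vec_eq_iff)

lemma cf_smat_X_Suc: "cf (Suc k) (smat [:0,1:] P) = cf k P"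
  unfolding cf_def smat_def by (simp add: vec_eq_iff)

lemma cf_smat_mat1: "cf k (smat d (mat 1)) = smat (coeff d k) (mat 1)"
  unfolding cf_def smat_def mat_def by (simp add: vec_eq_iff)

(* ---- part P6 ---- *)
lemma smat_0_left [simp]: "smat 0 A = (0::'a::comm_semiring_1^'n^'m)"
  by (simp add: smat_def vec_eq_iff)

lemma smat_mat1_right: "A ** smat c (mat 1) = smat c (A::'a::comm_semiring_1^'n^'m)"
  by (metis matrix_mul_rid smat_mult_right)

lemma cP_mat1: "cP (mat 1) = mat 1"
  unfolding cP_def mat_def by (simp add: vec_eq_iff)

lemma scalar_identity:
  fixes X0 Y :: "complex^'p^'q" and H :: "complex^'q^'p"
  assumes XHX: "X0 ** H ** X0 = X0"
    and rk: "\<forall>e. crank (X0 + smat e Y) \<le> crank X0"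
  shows "(mat 1 - X0 ** H) ** Y ** mpow (H ** Y) m ** (mat 1 - H ** X0) = 0"
proof -
  define N where "N = H ** Y"
  define L where "L = (mat 1 - X0 ** H) ** Y"
  define J where "J = (mat 1 - H ** X0 :: complex^'p^'p)"
  define TT :: "complex poly^'p^'p" where "TT = cP (mat 1) + smat [:0,1:] (cP N)"
  define AA where "AA = adjP TT"
  define d where "d = det TT"
  have pevT: "pev x TT = mat 1 + smat x N" for x
    by (simp add: TT_def pev_add pev_smat)
  have d0: "poly d 0 = 1" by (simp add: d_def pev_det pevT)
  have dnz: "d \<noteq> 0" using d0 by auto
  have key: "pev x (cP L ** AA ** cP J) = 0 \<and> pev x (TT ** AA) = pev x (smat d (mat 1))"
    if dx: "poly d x \<noteq> 0" and x0: "x \<noteq> 0" for x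
  proof -
    have "det (pev x TT) \<noteq> 0" using dx by (simp add: d_def pev_det)
    then have "invertible (pev x TT)" by (simp add: invertible_det_nz)
    then obtain Ti where Ti: "pev x TT ** Ti = mat 1" "Ti ** pev x TT = mat 1"
      unfolding invertible_def by blast
    have adj: "pev x AA = smat (poly d x) Ti"
      unfolding AA_def pev_adjP adjP_inv[OF Ti(1)] by (simp add: d_def pev_det)
    have inv: "(mat 1 + smat x (H ** Y)) ** Ti = mat 1" using Ti(1) by (simp add: pevT N_def)
    have "L ** Ti ** J = 0"
      unfolding L_def J_def using scal_step[OF XHX _ inv x0] rk by blast
    then have A1: "pev x (cP L ** AA ** cP J) = 0"
      by (simp add: pev_mult adj smat_mult_left[symmetric] smat_mult_right[symmetric])
    have A2: "pev x (TT ** AA) = pev x (smat d (mat 1))"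
      by (simp add: pev_mult adj smat_mult_right[symmetric] Ti(1) pev_smat)
    show ?thesis using A1 A2 by blast
  qed
  have I1: "cP L ** AA ** cP J = 0"
    by (rule pmat_zero_cofinite[OF dnz]) (use key in blast)
  have I2: "TT ** AA - smat d (mat 1) = 0"
    by (rule pmat_zero_cofinite[OF dnz]) (simp add: pev_diff key)
  define G where "G k = cf k AA" for k
  have G1: "L ** G k ** J = 0" for k
  proof -
    have "cf k (cP L ** AA ** cP J) = L ** G k ** J"
      by (simp add: G_def cf_cP_left cf_cP_right)
    then show ?thesis using I1 by simp
  qed
  have TTAA: "TT ** AA = AA + smat [:0,1:] (cP N ** AA)"
    by (simp add: TT_def matrix_add_rdistrib' cP_mat1 smat_mult_left)
  have TTAA': "TT ** AA = smat d (mat 1)" using I2 by simp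
  have G0: "G 0 = mat 1"
  proof -
    have "cf 0 (TT ** AA) = G 0" by (simp add: TTAA cf_add cf_smat_X_0 G_def)
    moreover have "cf 0 (TT ** AA) = mat 1"
      by (simp add: TTAA' cf_smat_mat1 poly_0_coeff_0[symmetric] d0)
    ultimately show ?thesis by simp
  qed
  have GS: "N ** G k = smat (coeff d (Suc k)) (mat 1) - G (Suc k)" for k
  proof -
    have "cf (Suc k) (TT ** AA) = G (Suc k) + N ** G k"
      by (simp add: TTAA cf_add cf_smat_X_Suc cf_cP_left G_def)
    moreover have "cf (Suc k) (TT ** AA) = smat (coeff d (Suc k)) (mat 1)"
      by (simp add: TTAA' cf_smat_mat1)
    ultimately show ?thesis by (metis add_diff_cancel_left')
  qed
  have main: "L ** mpow N m ** G k ** J = 0" for m k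
  proof (induction m arbitrary: k)
    case 0
    then show ?case using G1 by simp
  next
    case (Suc m)
    have Z: "L ** mpow N m ** J = 0" using Suc.IH[of 0] by (simp add: G0)
    have "L ** mpow N (Suc m) ** G k ** J = L ** mpow N m ** (N ** G k) ** J"
      by (simp only: mpow_Suc' matrix_mul_assoc)
    also have "\<dots> = smat (coeff d (Suc k)) (L ** mpow N m ** J) - L ** mpow N m ** G (Suc k) ** J"
      by (simp add: GS matrix_diff_ldistrib matrix_diff_rdistrib smat_mult_left smat_mat1_right)
    also have "\<dots> = 0" using Z Suc.IH[of "Suc k"] by simp
    finally show ?case .
  qed
  show ?thesis using main[of m 0] G0 unfolding L_def J_def N_def by simp
qed

(* ---- part P7 ---- *)
lemma ulemma:
  fixes M X0 :: "complex^'P^'Q" and H :: "complex^'Q^'P"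
  assumes XHX: "X0 ** H ** X0 = X0"
    and hyp: "\<forall>m. (mat 1 - X0 ** H) ** M ** mpow (H ** M) m ** (mat 1 - H ** X0) = 0"
  shows "crank M \<le> crank X0"
proof -
  define J where "J = (mat 1 - H ** X0 :: complex^'P^'P)"
  define J' where "J' = (mat 1 - X0 ** H :: complex^'Q^'Q)"
  define Gs where "Gs = {(M ** mpow (H ** M) m ** J) *v z | m z. True}"
  define U where "U = vec.span Gs"
  have subU: "vec.subspace U" unfolding U_def by (rule vec.subspace_span)
  have J'U: "J' *v u = 0" if u: "u \<in> U" for u
  proof (rule vec.span_induct[where P = "\<lambda>x. J' *v x = 0"])
    show "u \<in> vec.span Gs" using u U_def by simp
    show "vec.subspace {x. J' *v x = 0}" by (rule vec.subspace_kernel)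
    fix x assume "x \<in> Gs"
    then obtain m z where x: "x = (M ** mpow (H ** M) m ** J) *v z" unfolding Gs_def by blast
    have "J' *v x = (J' ** M ** mpow (H ** M) m ** J) *v z"
      by (simp add: x matrix_vector_mul_assoc matrix_mul_assoc)
    also have "\<dots> = 0" using hyp unfolding J'_def J_def by simp
    finally show "J' *v x = 0" .
  qed
  have uX: "u = X0 *v (H *v u)" if "u \<in> U" for u
  proof -
    have "J' *v u = u - (X0 ** H) *v u" unfolding J'_def by (simp add: matrix_vector_mult_diff_rdistrib)
    then show ?thesis using J'U[OF that] by (simp add: matrix_vector_mul_assoc)
  qed
  have MHU: "(M ** H) *v u \<in> U" if u: "u \<in> U" for u
  proof -
    have "(*v) (M ** H) ` Gs \<subseteq> Gs"
    proof
      fix y assume "y \<in> (*v) (M ** H) ` Gs"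
      then obtain m z where y: "y = (M ** H) *v ((M ** mpow (H ** M) m ** J) *v z)"
        unfolding Gs_def by blast
      have "y = (M ** mpow (H ** M) (Suc m) ** J) *v z"
        by (simp add: y matrix_vector_mul_assoc matrix_mul_assoc)
      then show "y \<in> Gs" unfolding Gs_def by blast
    qed
    then have "vec.span ((*v) (M ** H) ` Gs) \<subseteq> U" unfolding U_def by (rule vec.span_mono)
    then show ?thesis using u unfolding U_def vec.span_image by blast
  qed
  have MJ: "M *v (J *v z) \<in> U" for z
  proof -
    have "M *v (J *v z) = (M ** mpow (H ** M) 0 ** J) *v z" by (simp add: matrix_vector_mul_assoc)
    then have "M *v (J *v z) \<in> Gs" unfolding Gs_def by blast
    then show ?thesis unfolding U_def by (rule vec.span_base)
  qed
  define R1 where "R1 = range ((*v) J)"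
  define R2 where "R2 = (*v) H ` U"
  define W where "W = vec.span (R1 \<union> R2)"
  have sR1: "vec.subspace R1" unfolding R1_def by (rule subspace_range)
  have sR2: "vec.subspace R2" unfolding R2_def by (rule vec.subspace_image[OF subU])
  have MW: "(*v) M ` W \<subseteq> U"
  proof -
    have "(*v) M ` (R1 \<union> R2) \<subseteq> U"
      using MJ MHU unfolding R1_def R2_def by (auto simp: matrix_vector_mul_assoc)
    then have "vec.span ((*v) M ` (R1 \<union> R2)) \<subseteq> U"
      using subU by (simp add: vec.span_minimal)
    then show ?thesis unfolding W_def vec.span_image .
  qed
  have HXHX: "H ** X0 ** (H ** X0) = H ** X0" by (metis XHX matrix_mul_assoc)
  have JJ: "J ** J = J"
    unfolding J_def by (simp add: matrix_diff_ldistrib matrix_diff_rdistrib HXHX)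
  have int: "R1 \<inter> R2 = {0}"
  proof (intro equalityI subsetI)
    fix x :: "complex^'P" assume "x \<in> R1 \<inter> R2"
    then obtain z u where xz: "x = J *v z" and xu: "x = H *v u" and u: "u \<in> U"
      unfolding R1_def R2_def by blast
    have "J *v x = x" by (simp add: xz matrix_vector_mul_assoc JJ)
    moreover have "J *v x = 0"
    proof -
      have "J *v x = H *v u - (H ** X0) *v (H *v u)"
        unfolding J_def xu by (simp only: matrix_vector_mult_diff_rdistrib matrix_vector_mul_lid)
      also have "\<dots> = H *v u - H *v (X0 *v (H *v u))" by (simp only: matrix_vector_mul_assoc matrix_mul_assoc)
      finally show ?thesis using uX[OF u] by simp
    qed
    ultimately show "x \<in> {0}" by simp
  next
    fix x :: "complex^'P" assume "x \<in> {0}"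
    then show "x \<in> R1 \<inter> R2"
      using vec.subspace_0[OF sR1] vec.subspace_0[OF sR2] by simp
  qed
  have dimR2: "vec.dim R2 = vec.dim U"
  proof -
    have spU: "vec.span U = U" using subU by (rule vec.span_eq_iff[THEN iffD2])
    have "inj_on ((*v) H) (vec.span U)"
    proof (rule inj_onI)
      fix u u' assume u: "u \<in> vec.span U" and u': "u' \<in> vec.span U" and eq: "H *v u = H *v u'"
      have "u = X0 *v (H *v u)" using uX u spU by blast
      also have "\<dots> = X0 *v (H *v u')" using eq by simp
      also have "\<dots> = u'" using uX u' spU by metis
      finally show "u = u'" .
    qed
    then show ?thesis unfolding R2_def by (rule vec.dim_image_eq[OF lin_mv])
  qed
  have dimW: "vec.dim R1 + vec.dim U \<le> vec.dim W"
  proof -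
    have e1: "vec.dim {x + y |x y. x \<in> R1 \<and> y \<in> R2} + vec.dim (R1 \<inter> R2) = vec.dim R1 + vec.dim R2"
      by (rule vec.dim_sums_Int[OF sR1 sR2])
    have sub: "{x + y |x y. x \<in> R1 \<and> y \<in> R2} \<subseteq> W"
    proof
      fix z assume "z \<in> {x + y |x y. x \<in> R1 \<and> y \<in> R2}"
      then obtain x y where z: "z = x + y" and x: "x \<in> R1" and y: "y \<in> R2" by blast
      have "x \<in> W" unfolding W_def using x by (intro vec.span_base) simp
      moreover have "y \<in> W" unfolding W_def using y by (intro vec.span_base) simp
      ultimately show "z \<in> W" unfolding z W_def by (rule vec.span_add)
    qed
    have e2: "vec.dim {x + y |x y. x \<in> R1 \<and> y \<in> R2} \<le> vec.dim W"
      using sub by (rule vec.dim_subset)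
    have e3: "vec.dim (R1 \<inter> R2) = 0" unfolding int by simp
    show ?thesis using e1 e2 e3 dimR2 by linarith
  qed
  have step1: "crank M + vec.dim W \<le> vec.dim U + CARD('P)"
  proof -
    have "vec.dim ((*v) M ` UNIV) + vec.dim W \<le> vec.dim ((*v) M ` W) + vec.dim (UNIV :: (complex^'P) set)"
      by (rule dim_image_sub) (simp_all add: vec.subspace_UNIV)
    moreover have "vec.dim ((*v) M ` W) \<le> vec.dim U" using MW by (rule vec.dim_subset)
    moreover have "vec.dim (UNIV :: (complex^'P) set) = CARD('P)"
      by (simp add: vec.dim_UNIV card_cart_basis)
    ultimately show ?thesis unfolding crank_def by linarith
  qed
  have step2: "CARD('P) \<le> vec.dim R1 + crank (H ** X0)"
  proof -
    define R3 where "R3 = range ((*v) (H ** X0))"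
    have sR3: "vec.subspace R3" unfolding R3_def by (rule subspace_range)
    have "vec.dim {x + y |x y. x \<in> R1 \<and> y \<in> R3} + vec.dim (R1 \<inter> R3) = vec.dim R1 + vec.dim R3"
      by (rule vec.dim_sums_Int[OF sR1 sR3])
    moreover have "UNIV \<subseteq> {x + y |x y. x \<in> R1 \<and> y \<in> R3}"
    proof
      fix z :: "complex^'P"
      have "z = J *v z + (H ** X0) *v z" unfolding J_def by (simp add: matrix_vector_mult_diff_rdistrib)
      then show "z \<in> {x + y |x y. x \<in> R1 \<and> y \<in> R3}" unfolding R1_def R3_def by blast
    qed
    then have "vec.dim (UNIV :: (complex^'P) set) \<le> vec.dim {x + y |x y. x \<in> R1 \<and> y \<in> R3}"
      by (rule vec.dim_subset)
    moreover have "vec.dim (UNIV :: (complex^'P) set) = CARD('P)"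
      by (simp add: vec.dim_UNIV card_cart_basis)
    ultimately show ?thesis unfolding crank_def R3_def by linarith
  qed
  have "crank (H ** X0) \<le> crank X0" by (rule crank_mult_right)
  then show ?thesis using step1 step2 dimW by linarith
qed

(* ---- part P8 ---- *)
lemma crank_kron_I:
  fixes X0 :: "complex^'p^'q"
  shows "crank (kron X0 (mat 1 :: complex^'k^'k)) \<le> CARD('k) * crank X0"
proof -
  obtain B where B: "B \<subseteq> range ((*v) X0)" "vec.independent B" "range ((*v) X0) \<subseteq> vec.span B"
      "card B = vec.dim (range ((*v) X0))"
    using vec.basis_exists by blast
  have fB: "finite B" using B(2) vec.finiteI_independent by blast
  define Emb :: "'k \<Rightarrow> complex^'q^('q \<times> 'k)" where
    "Emb k = (\<chi> a b. if snd a = k \<and> fst a = b then 1 else 0)" for k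
  define sl :: "'k \<Rightarrow> complex^('p \<times> 'k) \<Rightarrow> complex^'p" where
    "sl k z = (\<chi> p. z $ (p, k))" for k z
  define S where "S = (\<Union>k. (*v) (Emb k) ` B)"
  have embv: "(Emb k *v w) $ (q, k0) = (if k = k0 then w $ q else 0)" for k w q k0
  proof -
    have "(Emb k *v w) $ (q, k0) = (\<Sum>b\<in>UNIV. (if k0 = k \<and> q = b then 1 else 0) * w $ b)"
      unfolding Emb_def matrix_vector_mult_def by simp
    also have "\<dots> = (\<Sum>b\<in>UNIV. if b = q then (if k = k0 then w $ b else 0) else 0)"
      by (intro sum.cong refl) auto
    also have "\<dots> = (if k = k0 then w $ q else 0)" by simp
    finally show ?thesis .
  qed
  have decomp: "kron X0 (mat 1) *v z = (\<Sum>k\<in>UNIV. Emb k *v (X0 *v sl k z))" for z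
  proof -
    have "(kron X0 (mat 1) *v z) $ (q, k0) = (\<Sum>k\<in>UNIV. Emb k *v (X0 *v sl k z)) $ (q, k0)" for q k0
    proof -
      have "(kron X0 (mat 1) *v z) $ (q, k0) = (\<Sum>pk\<in>UNIV. X0 $ q $ fst pk * (mat 1 :: complex^'k^'k) $ k0 $ snd pk * z $ pk)"
        by (simp add: kron_def matrix_vector_mult_def)
      also have "\<dots> = (\<Sum>p\<in>UNIV. \<Sum>k\<in>UNIV. X0 $ q $ p * (mat 1 :: complex^'k^'k) $ k0 $ k * z $ (p, k))"
        by (simp add: UNIV_Times_UNIV[symmetric] sum.cartesian_product case_prod_unfold del: UNIV_Times_UNIV)
      also have "\<dots> = (\<Sum>p\<in>UNIV. X0 $ q $ p * z $ (p, k0))"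
      proof (intro sum.cong refl)
        fix p
        have "(\<Sum>k\<in>UNIV. X0 $ q $ p * (mat 1 :: complex^'k^'k) $ k0 $ k * z $ (p, k))
            = (\<Sum>k\<in>UNIV. if k = k0 then X0 $ q $ p * z $ (p, k) else 0)"
          by (intro sum.cong refl) (auto simp: mat_def)
        also have "\<dots> = X0 $ q $ p * z $ (p, k0)" by simp
        finally show "(\<Sum>k\<in>UNIV. X0 $ q $ p * (mat 1 :: complex^'k^'k) $ k0 $ k * z $ (p, k)) = X0 $ q $ p * z $ (p, k0)" .
      qed
      also have "\<dots> = (X0 *v sl k0 z) $ q" by (simp add: sl_def matrix_vector_mult_def)
      also have "\<dots> = (\<Sum>k\<in>UNIV. if k = k0 then (X0 *v sl k z) $ q else 0)"
        by simp
      also have "\<dots> = (\<Sum>k\<in>UNIV. (Emb k *v (X0 *v sl k z)) $ (q, k0))"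
        by (intro sum.cong refl) (simp add: embv)
      also have "\<dots> = (\<Sum>k\<in>UNIV. Emb k *v (X0 *v sl k z)) $ (q, k0)"
        by (simp only: sum_component)
      finally show ?thesis .
    qed
    then show ?thesis by (simp add: vec_eq_iff)
  qed
  have "range ((*v) (kron X0 (mat 1 :: complex^'k^'k))) \<subseteq> vec.span S"
  proof
    fix x assume "x \<in> range ((*v) (kron X0 (mat 1 :: complex^'k^'k)))"
    then obtain z where x: "x = kron X0 (mat 1) *v z" by blast
    have "Emb k *v (X0 *v sl k z) \<in> vec.span S" for k
    proof -
      have "X0 *v sl k z \<in> vec.span B" using B(3) by blast
      then have "Emb k *v (X0 *v sl k z) \<in> vec.span ((*v) (Emb k) ` B)"
        unfolding vec.span_image by blast
      moreover have "vec.span ((*v) (Emb k) ` B) \<subseteq> vec.span S"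
        unfolding S_def by (rule vec.span_mono) blast
      ultimately show ?thesis by blast
    qed
    then show "x \<in> vec.span S" unfolding x decomp by (intro vec.span_sum) blast
  qed
  moreover have "finite S" unfolding S_def using fB by simp
  ultimately have "crank (kron X0 (mat 1 :: complex^'k^'k)) \<le> card S"
    unfolding crank_def by (rule vec.dim_le_card)
  also have "card S \<le> (\<Sum>k\<in>UNIV. card ((*v) (Emb k) ` B))"
    unfolding S_def by (rule card_UN_le) simp
  also have "\<dots> \<le> (\<Sum>k\<in>(UNIV::'k set). card B)"
    by (rule sum_mono) (rule card_image_le[OF fB])
  also have "\<dots> = CARD('k) * crank X0" using B(4) by (simp add: crank_def)
  finally show ?thesis .
qed

lemma ginv_exists:
  fixes X0 :: "complex^'p^'q"
  shows "\<exists>H :: complex^'q^'p. X0 ** H ** X0 = X0"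
proof -
  obtain B where B: "B \<subseteq> range ((*v) X0)" "vec.independent B" "range ((*v) X0) \<subseteq> vec.span B"
      "card B = vec.dim (range ((*v) X0))"
    using vec.basis_exists by blast
  define pre where "pre b = (SOME x. X0 *v x = b)" for b
  have pre: "X0 *v pre b = b" if b: "b \<in> B" for b
  proof -
    have "b \<in> range ((*v) X0)" using B(1) b by (rule subsetD)
    then obtain x where "b = X0 *v x" by (rule rangeE)
    then have "X0 *v x = b" by (rule sym)
    then show ?thesis unfolding pre_def by (rule someI)
  qed
  obtain g where g: "Vector_Spaces.linear (*s) (*s) g" "\<forall>x\<in>B. g x = pre x"
    using vec.linear_independent_extend[OF B(2)] by blast
  define H where "H = matrix g"
  have Hg: "H *v x = g x" for x unfolding H_def using g(1) by (rule matrix_works)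
  have "(X0 ** H) *v w = w" if w: "w \<in> vec.span B" for w
  proof (rule vec.linear_eq_on_span[OF lin_mv vec.linear_id _ w, unfolded id_def])
    fix b assume "b \<in> B"
    then show "(X0 ** H) *v b = b"
      by (simp add: matrix_vector_mul_assoc[symmetric] Hg g(2) pre)
  qed
  then have "(X0 ** H ** X0) *v v = X0 *v v" for v
  proof -
    assume *: "\<And>w. w \<in> vec.span B \<Longrightarrow> (X0 ** H) *v w = w"
    have "X0 *v v \<in> vec.span B" using B(3) by blast
    then have "(X0 ** H) *v (X0 *v v) = X0 *v v" by (rule *)
    then show ?thesis by (simp only: matrix_vector_mul_assoc)
  qed
  then show ?thesis using matrix_eq_mv by blast
qed

(* ---- part P9 ---- *)
lemma lin_comb_affine:
  "lin_comb y0 E + smat e (lin_comb y E) = lin_comb (\<lambda>i. y0 i + e * y i) E"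
  unfolding lin_comb_def smat_def vec_eq_iff
  by (simp add: sum.distrib sum_distrib_left distrib_right mult.assoc)

lemma main_abs:
  fixes E :: "'i::finite \<Rightarrow> complex^'p^'q" and A :: "'i \<Rightarrow> complex^'k^'k"
  assumes rk: "\<forall>y. crank (lin_comb y E) \<le> r" and att: "crank (lin_comb y0 E) = r"
    and comm: "\<forall>i j. A i ** A j = A j ** A i"
  shows "crank (\<Sum>i\<in>UNIV. kron (E i) (A i)) \<le> CARD('k) * r"
proof -
  define X0 where "X0 = lin_comb y0 E"
  obtain H where XHX: "X0 ** H ** X0 = X0" using ginv_exists by blast
  define HE where "HE i = H ** E i" for i
  define J where "J = (mat 1 - H ** X0 :: complex^'p^'p)"
  define J' where "J' = (mat 1 - X0 ** H :: complex^'q^'q)"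
  define C where "C v = J' ** E (hd v) ** lprod HE (tl v) ** J" for v
  have scal: "\<forall>y. (\<Sum>v\<in>Lm (Suc m). smat (prod_list (map y v)) (C v)) = 0" for m
  proof
    fix y
    define Y where "Y = lin_comb y E"
    have rkY: "\<forall>e. crank (X0 + smat e Y) \<le> crank X0"
      unfolding X0_def Y_def lin_comb_affine using rk att by simp
    have Z: "J' ** Y ** mpow (H ** Y) m ** J = 0"
      unfolding J_def J'_def by (rule scalar_identity[OF XHX rkY])
    have HY: "H ** Y = (\<Sum>i\<in>UNIV. smat (y i) (HE i))"
      unfolding Y_def lin_comb_eq HE_def by (simp add: sum_mult_right smat_mult_right)
    have J'Y: "J' ** Y = (\<Sum>i\<in>UNIV. smat (y i) (J' ** E i))"
      unfolding Y_def lin_comb_eq by (simp add: sum_mult_right smat_mult_right)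
    have "J' ** Y ** mpow (H ** Y) m ** J
        = (\<Sum>i\<in>UNIV. \<Sum>w\<in>Lm m. smat (y i) (J' ** E i) ** smat (prod_list (map y w)) (lprod HE w) ** J)"
      unfolding J'Y HY mpow_sum_smat by (simp add: sum_mult_left sum_mult_right) (rule sum.swap)
    also have "\<dots> = (\<Sum>i\<in>UNIV. \<Sum>w\<in>Lm m. smat (prod_list (map y (i # w))) (C (i # w)))"
      by (intro sum.cong refl)
         (simp add: C_def smat_mult_left[symmetric] smat_mult_right[symmetric] smat_smat matrix_mul_assoc mult.commute)
    also have "\<dots> = (\<Sum>v\<in>Lm (Suc m). smat (prod_list (map y v)) (C v))"
      by (rule Lm_Suc_sum[symmetric])
    finally show "(\<Sum>v\<in>Lm (Suc m). smat (prod_list (map y v)) (C v)) = 0" using Z by simp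
  qed
  define MM where "MM = (\<Sum>i\<in>UNIV. kron (E i) (A i))"
  define HH where "HH = kron H (mat 1 :: complex^'k^'k)"
  define XX where "XX = kron X0 (mat 1 :: complex^'k^'k)"
  have XHX': "XX ** HH ** XX = XX"
    unfolding XX_def HH_def by (simp add: kron_mult XHX)
  have JJ': "mat 1 - XX ** HH = kron J' (mat 1)"
    unfolding XX_def HH_def J'_def by (simp add: kron_mult kron_diff_left kron_mat1)
  have JJ: "mat 1 - HH ** XX = kron J (mat 1)"
    unfolding XX_def HH_def J_def by (simp add: kron_mult kron_diff_left kron_mat1)
  have HM: "HH ** MM = (\<Sum>i\<in>UNIV. kron (HE i) (A i))"
    unfolding HH_def MM_def HE_def by (simp add: sum_mult_right kron_mult)
  have big: "\<forall>m. (mat 1 - XX ** HH) ** MM ** mpow (HH ** MM) m ** (mat 1 - HH ** XX) = 0"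
  proof
    fix m
    have "(mat 1 - XX ** HH) ** MM ** mpow (HH ** MM) m ** (mat 1 - HH ** XX)
        = (\<Sum>i\<in>UNIV. \<Sum>w\<in>Lm m. kron J' (mat 1) ** kron (E i) (A i) ** kron (lprod HE w) (lprod A w) ** kron J (mat 1))"
      unfolding JJ JJ' HM mpow_sum_kron unfolding MM_def by (simp add: sum_mult_left sum_mult_right) (rule sum.swap)
    also have "\<dots> = (\<Sum>i\<in>UNIV. \<Sum>w\<in>Lm m. kron (C (i # w)) (lprod A (i # w)))"
      by (intro sum.cong refl) (simp add: kron_mult C_def)
    also have "\<dots> = (\<Sum>v\<in>Lm (Suc m). kron (C v) (lprod A v))"
      by (rule Lm_Suc_sum[symmetric])
    also have "\<dots> = 0" by (rule transfer_comm[OF comm scal])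
    finally show "(mat 1 - XX ** HH) ** MM ** mpow (HH ** MM) m ** (mat 1 - HH ** XX) = 0" .
  qed
  have "crank MM \<le> crank XX" by (rule ulemma[OF XHX' big])
  also have "\<dots> \<le> CARD('k) * crank X0" unfolding XX_def by (rule crank_kron_I)
  finally show ?thesis using att X0_def MM_def by simp
qed

(* ---- part P10 ---- *)
lemma column_axis: "(B::complex^'n^'m) *v axis i 1 = column i B"
  unfolding column_def matrix_vector_mult_def axis_def
  by (simp add: vec_eq_iff if_distrib if_distribR cong: if_cong)

lemma span_columns: "vec.span (columns (B::complex^'n^'m)) = range ((*v) B)"
proof
  show "vec.span (columns B) \<subseteq> range ((*v) B)"
  proof (rule vec.span_minimal)
    show "columns B \<subseteq> range ((*v) B)"
      unfolding columns_def by (auto simp: column_axis[symmetric])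
    show "vec.subspace (range ((*v) B))" by (rule subspace_range)
  qed
  show "range ((*v) B) \<subseteq> vec.span (columns B)"
  proof
    fix x assume "x \<in> range ((*v) B)"
    then obtain z where x: "x = B *v z" by blast
    have "B *v z = (\<Sum>i\<in>UNIV. z $ i *s column i B)" by (rule matrix_mult_sum)
    also have "\<dots> \<in> vec.span (columns B)"
      by (intro vec.span_sum vec.span_scale vec.span_base) (auto simp: columns_def)
    finally show "x \<in> vec.span (columns B)" using x by simp
  qed
qed

lemma rank_crank: "rank (A::complex^'n^'m) = crank (transpose A)"
proof -
  have "rank A = vec.dim (rows A)" by (simp only: row_rank_def_gen)
  also have "rows A = columns (transpose A)" by simp
  also have "vec.dim (columns (transpose A)) = vec.dim (vec.span (columns (transpose A)))"
    by (rule vec.dim_span[symmetric])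
  also have "\<dots> = crank (transpose A)" unfolding span_columns crank_def ..
  finally show ?thesis .
qed

lemma lin_comb_delta: "lin_comb (\<lambda>l. if l = i then 1 else 0) F = F i"
  unfolding lin_comb_def by (simp add: vec_eq_iff if_distrib if_distribR cong: if_cong)

theorem mainTheorem2:
  fixes E :: "'i::finite \<Rightarrow> complex^'c::finite^'b::finite"
    and F :: "'i \<Rightarrow> complex^'k::finite^'k"
    and r :: nat
  assumes E_basis: "clin_indep_fam E"
    and E_bounded: "bounded_rank (cspan_fam E) r"
    and F_basis: "clin_indep_fam F"
    and F_comm: "\<forall>X\<in>cspan_fam F. \<forall>Y\<in>cspan_fam F. X ** Y = Y ** X"
  shows "\<forall>M\<in>cspan_fam (\<lambda>l. kron (E l) (F l)). rank M \<le> CARD('k) * r"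
proof
  fix M assume "M \<in> cspan_fam (\<lambda>l. kron (E l) (F l))"
  then obtain t where M: "M = lin_comb t (\<lambda>l. kron (E l) (F l))" by (auto simp: cspan_fam_def)
  define E' where "E' l = transpose (E l)" for l
  define A where "A l = smat (t l) (transpose (F l))" for l
  obtain A0 where A0: "A0 \<in> cspan_fam E" "rank A0 = r" and all: "\<forall>B\<in>cspan_fam E. rank B \<le> r"
    using E_bounded unfolding bounded_rank_def by blast
  obtain y0 where y0: "A0 = lin_comb y0 E" using A0(1) by (auto simp: cspan_fam_def)
  have tr: "transpose (lin_comb y E) = lin_comb y E'" for y
    unfolding lin_comb_def E'_def transpose_def by (simp add: vec_eq_iff)
  have rk: "\<forall>y. crank (lin_comb y E') \<le> r"
  proof
    fix y
    have "lin_comb y E \<in> cspan_fam E" by (auto simp: cspan_fam_def)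
    then have "rank (lin_comb y E) \<le> r" using all by blast
    then show "crank (lin_comb y E') \<le> r" by (simp add: rank_crank tr)
  qed
  have att: "crank (lin_comb y0 E') = r" using A0(2) y0 by (simp add: rank_crank tr)
  have Fin: "F i \<in> cspan_fam F" for i
    unfolding cspan_fam_def using lin_comb_delta[of i F] by (metis (mono_tags, lifting) mem_Collect_eq)
  have comm: "\<forall>i j. A i ** A j = A j ** A i"
  proof (intro allI)
    fix i j
    have FF: "F j ** F i = F i ** F j" using F_comm Fin by blast
    have "A i ** A j = smat (t i * t j) (transpose (F j ** F i))"
      unfolding A_def by (simp add: smat_mult_left[symmetric] smat_mult_right[symmetric] smat_smat matrix_transpose_mul mult.commute)
    also have "\<dots> = smat (t j * t i) (transpose (F i ** F j))" by (simp add: FF mult.commute)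
    also have "\<dots> = A j ** A i"
      unfolding A_def by (simp add: smat_mult_left[symmetric] smat_mult_right[symmetric] smat_smat matrix_transpose_mul mult.commute)
    finally show "A i ** A j = A j ** A i" .
  qed
  have trM: "transpose M = (\<Sum>l\<in>UNIV. kron (E' l) (A l))"
  proof -
    have "transpose M $ cq $ bp = (\<Sum>l\<in>UNIV. kron (E' l) (A l)) $ cq $ bp" for cq :: "'c \<times> 'k" and bp :: "'b \<times> 'k"
    proof -
      obtain c q where cq: "cq = (c, q)" by fastforce
      obtain b p where bp: "bp = (b, p)" by fastforce
      have "transpose M $ cq $ bp = (\<Sum>l\<in>UNIV. t l * (E l $ b $ c * F l $ p $ q))"
        unfolding M cq bp transpose_def lin_comb_def kron_def by simp
      also have "\<dots> = (\<Sum>l\<in>UNIV. kron (E' l) (A l) $ cq $ bp)"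
        unfolding cq bp E'_def A_def kron_def transpose_def smat_def by (simp add: mult_ac)
      also have "\<dots> = (\<Sum>l\<in>UNIV. kron (E' l) (A l)) $ cq $ bp" by (simp only: sum_component)
      finally show ?thesis .
    qed
    then show ?thesis by (simp add: vec_eq_iff)
  qed
  have "rank M = crank (\<Sum>l\<in>UNIV. kron (E' l) (A l))" by (simp add: rank_crank trM)
  also have "\<dots> \<le> CARD('k) * r" by (rule main_abs[OF rk att comm])
  finally show "rank M \<le> CARD('k) * r" .
qed

end
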